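(* Let $q$ be a prime power, and let $\chi'$ and $\chi$ be the canonical additive characters of $\mathbb{F}_{q^2}$ and $\mathbb{F}_q$, respectively. For integers $e_1,e_2$ and $a,b\in\mathbb{F}_{q^2}$, define $$S_{(e_1,e_2)}(a,b):=\sum_{x\in\mathbb{F}_{q^2}^*}\chi'\!\left(a x^{(q+1)e_1}+b x^{e_2}\right).$$ If $a^q+a\neq 0$, $b\neq 0$ and $\gcd(q+1,e_2)=1$, then $$S_{(e_1,e_2)}(a,b)=-\sum_{z\in\mathbb{F}_q^*}\sum_{x\in\mathbb{F}_q^*}\chi\!\left(z+(a^q+a)x^{e_1}+z^{-1}b^{q+1}x^{e_2}\right).$$
   Context: For a finite field $F$ of characteristic $p$, the canonical additive character is $\chi(c)=e^{2\pi i\,\mathrm{Tr}_{F/\mathbb{F}_p}(c)/p}$. *)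

theory Defs
  imports Complex_Main "HOL-Computational_Algebra.Primes"
begin

text \<open>For a subfield of order p^n
  of a larger field, this is the trace of that subfield evaluated inside the big field.\<close>
definition abs_trace :: "nat \<Rightarrow> 'a::field \<Rightarrow> 'a" where
  "abs_trace n c = (\<Sum>i<n. c ^ (CHAR('a) ^ i))"

definition prime_field_val :: "'a::field \<Rightarrow> nat" where
  "prime_field_val y = (THE k. k < CHAR('a) \<and> of_nat k = y)"

definition can_add_char :: "nat \<Rightarrow> 'a::field \<Rightarrow> complex" where
  "can_add_char n c =
     exp (2 * of_real pi * \<i> * of_nat (prime_field_val (abs_trace n c)) / of_nat CHAR('a))"

end

theory Submission
  imports Defs "HOL-Number_Theory.Residues" "HOL-Analysis.Complex_Transcendental" "HOL-Computational_Algebra.Polynomial"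
begin

lemma sum_lessThan_add_split:
  "(\<Sum>i<k+(n::nat). f i) = (\<Sum>i<k. f i) + (\<Sum>i<n. f (k+i))"
  by (induction n) (auto simp: add.assoc)

lemma roots_card_le:
  fixes P :: "'a::field poly"
  assumes "P \<noteq> 0" "degree P \<le> d"
  shows "card {x. poly P x = 0} \<le> d" "finite {x. poly P x = 0}"
  using card_poly_roots_bound[OF assms(1)] assms poly_roots_finite[OF assms(1)] by auto

lemma card_pow_eq_le:
  fixes c :: "'a::field"
  assumes "n > 0"
  shows "card {x. x ^ n = c} \<le> n" "finite {x. x ^ n = c}"
proof -
  define P where "P = monom (1::'a) n - [:c:]"
  have deg: "degree P \<le> n" unfolding P_def using assms
    by (intro degree_diff_le) (auto intro: order.trans[OF degree_monom_le])
  have "coeff P n = 1" unfolding P_def using assms by (auto simp: coeff_monom coeff_pCons split: nat.split)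
  hence nz: "P \<noteq> 0" by auto
  have eq: "{x. x ^ n = c} = {x. poly P x = 0}" by (auto simp: P_def poly_monom)
  show "card {x. x ^ n = c} \<le> n" "finite {x. x ^ n = c}"
    unfolding eq using roots_card_le[OF nz deg] by auto
qed

lemma card_pow_eq_self_le:
  assumes "n > 1"
  shows "card {x::'a::field. x ^ n = x} \<le> n" "finite {x::'a::field. x ^ n = x}"
proof -
  define P where "P = monom (1::'a) n - monom 1 1"
  have deg: "degree P \<le> n" unfolding P_def using assms
    by (intro degree_diff_le) (auto intro: order.trans[OF degree_monom_le])
  have "coeff P n = 1" unfolding P_def using assms by (auto simp: coeff_monom coeff_pCons split: nat.split)
  hence nz: "P \<noteq> 0" by auto
  have eq: "{x. x ^ n = x} = {x. poly P x = 0}" by (auto simp: P_def poly_monom)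
  show "card {x::'a. x ^ n = x} \<le> n" "finite {x::'a. x ^ n = x}"
    unfolding eq using roots_card_le[OF nz deg] by auto
qed

lemma sum_le_const_eq:
  fixes f :: "'b \<Rightarrow> nat"
  assumes "finite A" "\<And>x. x \<in> A \<Longrightarrow> f x \<le> c" "sum f A \<ge> c * card A" "x \<in> A"
  shows "f x = c"
proof (rule ccontr)
  assume "f x \<noteq> c"
  hence lt: "f x < c" using assms(2)[OF assms(4)] by auto
  have "sum f A = f x + sum f (A - {x})" using assms by (simp add: sum.remove)
  also have "sum f (A - {x}) \<le> c * card (A - {x})"
    using sum_bounded_above[of "A - {x}" f c] assms(2) by (auto simp: mult.commute)
  also have "card (A - {x}) = card A - 1" using assms by simp
  finally have "sum f A < c + c * (card A - 1)" using lt by linarith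
  also have "c + c * (card A - 1) = c * card A"
    using assms(1,4) by (cases "card A") (auto simp: card_gt_0_iff)
  finally show False using assms(3) by simp
qed

lemma sum_group_card:
  assumes "finite S" "finite T" "g ` S \<subseteq> T"
  shows "(\<Sum>x\<in>S. h (g x)) = (\<Sum>t\<in>T. of_nat (card {x\<in>S. g x = t}) * (h t :: 'c::comm_semiring_1))"
proof -
  have "(\<Sum>x\<in>S. h (g x)) = (\<Sum>t\<in>T. \<Sum>x\<in>{x. x \<in> S \<and> g x = t}. h (g x))"
    using sum.group[OF assms, of "\<lambda>x. h (g x)"] by simp
  also have "\<dots> = (\<Sum>t\<in>T. of_nat (card {x\<in>S. g x = t}) * h t)"
    by (intro sum.cong refl) (simp add: sum_constant_scale)
  finally show ?thesis .
qed

locale ffield =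
  fixes p m q :: nat and dummy :: "'a::field"
  assumes fin: "finite (UNIV :: 'a::field set)"
    and pp: "prime p" and m0: "m > 0" and qd: "q = p ^ m"
    and cardU: "card (UNIV :: 'a set) = q ^ 2"
begin

lemma charp: "CHAR('a) = p"
proof -
  have "CHAR('a) > 0" using fin finite_imp_CHAR_pos by blast
  hence pr: "prime CHAR('a)" using prime_CHAR_semidom by blast
  have "CHAR('a) dvd p ^ (m * 2)" using CHAR_dvd_CARD[where 'a='a] cardU qd
    by (simp add: power_mult)
  hence "CHAR('a) dvd p" using pr prime_dvd_power by blast
  thus ?thesis using pr pp by (simp add: primes_dvd_imp_eq)
qed

lemma q_ge2: "q \<ge> 2"
proof -
  have "p \<ge> 2" using pp prime_ge_2_nat by blast
  hence "p ^ m \<ge> p ^ 1" using m0 by (intro power_increasing) auto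
  thus ?thesis using qd \<open>p \<ge> 2\<close> by simp
qed

lemma frob: "(x + y :: 'a) ^ (p ^ k) = x ^ (p ^ k) + y ^ (p ^ k)"
  using freshmans_dream'[of "p ^ k" k x y] charp pp by simp

lemma frobq: "(x + y :: 'a) ^ q = x ^ q + y ^ q"
  using frob qd by simp

lemma frobq_diff: "(x - y :: 'a) ^ q = x ^ q - y ^ q"
  using frobq[of "x - y" y] by (simp add: algebra_simps)

lemma pow_card: "(x::'a) ^ (q ^ 2) = x"
proof (cases "x = 0")
  case False
  have "x * (\<Prod>y\<in>UNIV-{0}. x * y) = x * x ^ (card (UNIV :: 'a set) - 1) * \<Prod>(UNIV-{0})"
    using fin by (simp add: prod.distrib mult_ac)
  also have "x * x ^ (card (UNIV :: 'a set) - 1) = x ^ Suc (card (UNIV :: 'a set) - 1)"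
    by (subst power_Suc) auto
  also have "Suc (card (UNIV :: 'a set) - 1) = card (UNIV :: 'a set)"
    using fin by (simp add: Suc_diff_1 finite_UNIV_card_ge_0)
  also have "(\<Prod>y\<in>UNIV-{0}. x * y) = (\<Prod>y\<in>UNIV-{0}. y)"
    by (rule prod.reindex_bij_witness[of _ "\<lambda>y. y / x" "\<lambda>y. x * y"]) (use False in auto)
  finally show ?thesis using cardU fin by simp
qed (use q_ge2 in auto)

lemma finA [simp]: "finite (A :: 'a set)"
  using fin by (rule finite_subset[rotated]) simp

lemma fq_add: "(x::'a) ^ q = x \<Longrightarrow> y ^ q = y \<Longrightarrow> (x + y) ^ q = x + y"
  by (simp add: frobq)

lemma fq_mult: "(x::'a) ^ q = x \<Longrightarrow> y ^ q = y \<Longrightarrow> (x * y) ^ q = x * y"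
  by (simp add: power_mult_distrib)

lemma fq_powi: "(x::'a) ^ q = x \<Longrightarrow> (x powi k) ^ q = x powi k"
proof -
  assume h: "x ^ q = x"
  have "(x powi k) ^ q = x powi (k * int q)" by (rule power_int_power')
  also have "\<dots> = (x ^ q) powi k" by (simp add: power_int_power mult.commute)
  finally show ?thesis using h by simp
qed

lemma fq_inverse: "(x::'a) ^ q = x \<Longrightarrow> (inverse x) ^ q = inverse x"
  by (simp add: power_inverse)

lemma pow_q_q: "((x::'a) ^ q) ^ q = x"
  using pow_card[of x] by (simp add: power2_eq_square power_mult)

lemma norm_in: "((y::'a) ^ (q + 1)) ^ q = y ^ (q + 1)"
proof -
  have "(y ^ (q + 1)) ^ q = (y ^ q) ^ q * y ^ q" by (simp add: power_mult_distrib flip: power_mult)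
  also have "\<dots> = y * y ^ q" by (simp add: pow_q_q)
  finally show ?thesis by simp
qed

lemma tr_in: "((y::'a) + y ^ q) ^ q = y + y ^ q"
  by (simp add: frobq pow_q_q)

lemma at_add: "abs_trace n (x + y :: 'a) = abs_trace n x + abs_trace n y"
  unfolding abs_trace_def charp by (simp add: frob sum.distrib)

lemma at_2m: "abs_trace (2 * m) (y::'a) = abs_trace m (y + y ^ q)"
proof -
  have "abs_trace (2 * m) y = (\<Sum>i<m + m. y ^ (p ^ i))" unfolding abs_trace_def charp
    by (simp add: mult_2)
  also have "\<dots> = (\<Sum>i<m. y ^ (p ^ i)) + (\<Sum>i<m. (y ^ q) ^ (p ^ i))"
    by (simp add: sum_lessThan_add_split power_add power_mult qd)
  also have "\<dots> = abs_trace m (y + y ^ q)"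
    by (simp add: at_add) (simp add: abs_trace_def charp)
  finally show ?thesis .
qed

lemma at_pow_p:
  assumes "(x::'a) ^ q = x"
  shows "(abs_trace m x) ^ p = abs_trace m x"
proof -
  obtain m' where m': "m = Suc m'" using m0 by (cases m) auto
  define f where "f i = x ^ (p ^ i)" for i
  have "(abs_trace m x) ^ p = (\<Sum>i<m. (x ^ (p ^ i)) ^ p)"
    unfolding abs_trace_def charp by (rule freshmans_dream_sum) (simp_all add: charp pp)
  also have "\<dots> = (\<Sum>i<m. f (Suc i))" by (simp add: f_def power_mult[symmetric] mult.commute)
  also have "\<dots> = (\<Sum>i<m'. f (Suc i)) + f m" by (simp add: m')
  also have "f m = f 0" using assms by (simp add: f_def qd)
  also have "(\<Sum>i<m'. f (Suc i)) + f 0 = (\<Sum>i<m. f i)"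
    unfolding m' sum.lessThan_Suc_shift by simp
  finally show ?thesis by (simp add: abs_trace_def charp f_def)
qed

lemma of_nat_pow_p: "(of_nat k :: 'a) ^ p = of_nat k"
proof (induction k)
  case (Suc k)
  then show ?case using frob[of "of_nat k" 1 1] by (simp add: add.commute)
qed (use pp prime_gt_0_nat in auto)

lemma of_nat_inj_p: "k < p \<Longrightarrow> l < p \<Longrightarrow> (of_nat k :: 'a) = of_nat l \<Longrightarrow> k = l"
  using of_nat_eq_iff_cong_CHAR[of k l, where 'a='a] charp by (simp add: cong_def)

lemma prime_field:
  assumes "(y::'a) ^ p = y"
  shows "\<exists>k<p. of_nat k = y"
proof -
  have p1: "p > 1" using pp prime_gt_1_nat by blast
  have "inj_on (of_nat :: nat \<Rightarrow> 'a) {..<p}" using of_nat_inj_p by (auto intro: inj_onI)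
  hence c: "card ((of_nat :: nat \<Rightarrow> 'a) ` {..<p}) = p" by (simp add: card_image)
  have sub: "(of_nat :: nat \<Rightarrow> 'a) ` {..<p} \<subseteq> {y. y ^ p = y}" using of_nat_pow_p by auto
  have cb: "card {y::'a. y ^ p = y} \<le> p" "finite {y::'a. y ^ p = y}"
    using card_pow_eq_self_le[OF p1] by blast+
  have "card ((of_nat :: nat \<Rightarrow> 'a) ` {..<p}) \<le> card {y::'a. y ^ p = y}"
    by (rule card_mono[OF cb(2) sub])
  hence "(of_nat :: nat \<Rightarrow> 'a) ` {..<p} = {y. y ^ p = y}"
    using sub c cb by (intro card_subset_eq) auto
  hence "y \<in> (of_nat :: nat \<Rightarrow> 'a) ` {..<p}" using assms by blast
  thus ?thesis by auto
qed

lemma pfv_of_nat: "k < p \<Longrightarrow> prime_field_val (of_nat k :: 'a) = k"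
  unfolding prime_field_val_def charp
  by (rule the_equality) (auto dest: of_nat_inj_p)

definition E :: "nat \<Rightarrow> nat \<Rightarrow> complex" where
  "E pp k = exp (2 * of_real pi * \<i> * of_nat k / of_nat pp)"

lemma E_add: "E n (k + l) = E n k * E n l"
  unfolding E_def by (simp add: add_divide_distrib distrib_left flip: exp_add)

lemma E_mult: "n > 0 \<Longrightarrow> E n (n * d) = 1"
  unfolding E_def
  by (simp add: exp_of_nat_mult[symmetric] mult_ac)

lemma E_mod: "n > 0 \<Longrightarrow> E n (k mod n) = E n k"
  using E_add[of n "n * (k div n)" "k mod n"] E_mult[of n "k div n"] by simp

lemma chi_val:
  assumes "(c::'a) ^ q = c"
  obtains k where "k < p" "abs_trace m c = of_nat k" "can_add_char m c = E p k"
proof -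
  obtain k where k: "k < p" "of_nat k = abs_trace m c" using prime_field[OF at_pow_p[OF assms]] by blast
  show ?thesis
    by (rule that[OF k(1) k(2)[symmetric]]) (simp add: can_add_char_def E_def charp k(2)[symmetric] pfv_of_nat[OF k(1)])
qed

lemma chi_add:
  assumes "(u::'a) ^ q = u" "v ^ q = v"
  shows "can_add_char m (u + v) = can_add_char m u * can_add_char m v"
proof -
  have p0: "p > 0" using pp prime_gt_0_nat by blast
  obtain k where k: "k < p" "abs_trace m u = of_nat k" "can_add_char m u = E p k" using chi_val[OF assms(1)] .
  obtain l where l: "l < p" "abs_trace m v = of_nat l" "can_add_char m v = E p l" using chi_val[OF assms(2)] .
  have "abs_trace m (u + v) = of_nat ((k + l) mod p)"
    using of_nat_eq_iff_cong_CHAR[of "(k + l) mod p" "k + l", where 'a='a] charp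
    by (simp add: at_add k l cong_def)
  hence "can_add_char m (u + v) = E p ((k + l) mod p)"
    by (simp add: can_add_char_def E_def charp pfv_of_nat p0)
  thus ?thesis by (simp add: E_mod p0 E_add k l)
qed

lemma chi_2m: "can_add_char (2 * m) (y::'a) = can_add_char m (y + y ^ q)"
  unfolding can_add_char_def at_2m ..

lemma card_main:
  "card {z::'a. z ^ q = z} = q \<and> (\<forall>s. s ^ q = s \<and> s \<noteq> 0 \<longrightarrow> card {y::'a. y ^ (q + 1) = s} = q + 1)"
proof -
  define Fs where "Fs = {z::'a. z ^ q = z \<and> z \<noteq> 0}"
  define fib where "fib s = {y::'a. y ^ (q + 1) = s}" for s
  have q2: "q \<ge> 2" by (rule q_ge2)
  have U: "UNIV - {0} = (\<Union>s\<in>Fs. fib s)"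
  proof (intro equalityI subsetI)
    fix y :: 'a assume "y \<in> UNIV - {0}"
    hence "y ^ (q + 1) \<in> Fs" using norm_in[of y] by (auto simp: Fs_def)
    thus "y \<in> (\<Union>s\<in>Fs. fib s)" by (auto simp: fib_def)
  next
    fix y :: 'a assume "y \<in> (\<Union>s\<in>Fs. fib s)"
    thus "y \<in> UNIV - {0}" by (auto simp: Fs_def fib_def)
  qed
  have "card (UNIV - {0::'a}) = q ^ 2 - 1" using cardU by (simp add: card_Diff_singleton)
  also have "card (UNIV - {0::'a}) = (\<Sum>s\<in>Fs. card (fib s))"
    unfolding U by (rule card_UN_disjoint) (auto simp: fib_def)
  finally have sumeq: "(\<Sum>s\<in>Fs. card (fib s)) = q ^ 2 - 1" .
  have fb: "card (fib s) \<le> q + 1" for s unfolding fib_def by (rule card_pow_eq_le) simp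
  have "(\<Sum>s\<in>Fs. card (fib s)) \<le> card Fs * (q + 1)"
    using sum_bounded_above[of Fs "\<lambda>s. card (fib s)" "q + 1"] fb by simp
  hence A: "q ^ 2 - 1 \<le> card Fs * (q + 1)" using sumeq by simp
  have qq: "q ^ 2 - 1 = (q - 1) * (q + 1)"
    using q2 by (cases q) (auto simp: power2_eq_square algebra_simps)
  have Fq_le: "card {z::'a. z ^ q = z} \<le> q" using card_pow_eq_self_le(1)[of q] q2 by simp
  have FsFq: "Fs = {z::'a. z ^ q = z} - {0}" by (auto simp: Fs_def)
  have z0: "(0::'a) \<in> {z::'a. z ^ q = z}" using q2 by simp
  have cFs: "card Fs = card {z::'a. z ^ q = z} - 1" unfolding FsFq using z0 by (simp add: card_Diff_singleton)
  have "(q - 1) * (q + 1) \<le> card Fs * (q + 1)" using A qq by simp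
  hence "q - 1 \<le> card Fs" by (rule mult_right_le_imp_le) simp
  hence cFs2: "card Fs = q - 1" using cFs Fq_le by linarith
  have "card {z::'a. z ^ q = z} > 0" using z0 card_gt_0_iff[of "{z::'a. z ^ q = z}"] finA by blast
  hence cFq: "card {z::'a. z ^ q = z} = q" using cFs cFs2 Fq_le q2 by arith
  have "card (fib s) = q + 1" if "s \<in> Fs" for s
    by (rule sum_le_const_eq[of Fs, OF _ fb]) (use sumeq qq cFs2 that in auto)
  thus ?thesis using cFq by (auto simp: Fs_def fib_def)
qed

lemma exists_tr: "\<exists>t::'a. t ^ q = t \<and> abs_trace m t \<noteq> 0"
proof (rule ccontr)
  assume "\<not> ?thesis"
  hence all0: "\<And>t::'a. t ^ q = t \<Longrightarrow> abs_trace m t = 0" by blast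
  have p1: "p > 1" using pp prime_gt_1_nat by blast
  define T where "T = (\<Sum>i<m. monom (1::'a) (p ^ i))"
  have pT: "poly T x = abs_trace m x" for x
    unfolding T_def abs_trace_def charp by (simp add: poly_sum poly_monom)
  have "coeff T (p ^ (m - 1)) = (\<Sum>i<m. if i = m - 1 then 1 else 0)"
    unfolding T_def coeff_sum using p1 by (intro sum.cong refl) (auto simp: coeff_monom power_inject_exp)
  also have "\<dots> = 1" using m0 by simp
  finally have "T \<noteq> 0" by auto
  moreover have "degree T \<le> p ^ (m - 1)"
    unfolding T_def by (intro degree_sum_le) (use p1 in \<open>auto intro!: order.trans[OF degree_monom_le] power_increasing\<close>)
  ultimately have "card {x. poly T x = 0} \<le> p ^ (m - 1)" by (rule roots_card_le)
  moreover have "{z::'a. z ^ q = z} \<subseteq> {x. poly T x = 0}" using all0 pT by auto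
  hence "card {z::'a. z ^ q = z} \<le> card {x. poly T x = 0}" by (intro card_mono) auto
  ultimately have "q \<le> p ^ (m - 1)" using card_main by simp
  moreover have "p ^ (m - 1) < p ^ m" using p1 m0 by (intro power_strict_increasing) auto
  ultimately show False using qd by simp
qed

lemma chi_ne1:
  assumes "(t::'a) ^ q = t" "abs_trace m t \<noteq> 0"
  shows "can_add_char m t \<noteq> 1"
proof
  assume h: "can_add_char m t = 1"
  obtain k where k: "k < p" "abs_trace m t = of_nat k" "can_add_char m t = E p k" using chi_val[OF assms(1)] .
  have k0: "k > 0" using k assms(2) by (cases k) auto
  have p0: "p > 0" using k by simp
  from h k have "exp (2 * of_real pi * \<i> * of_nat k / of_nat p) = 1" by (simp add: E_def)
  then obtain n :: int where n: "Im (2 * of_real pi * \<i> * of_nat k / of_nat p) = of_int (2 * n) * pi"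
    unfolding exp_eq_1 by blast
  hence "2 * pi * real k / real p = of_int (2 * n) * pi" by simp
  hence "real k = of_int n * real p" using p0 pi_gt_zero by (simp add: field_simps)
  hence kn: "int k = n * int p" by (metis of_int_eq_iff of_int_mult of_int_of_nat_eq)
  show False
  proof (cases "n \<le> 0")
    case True
    hence "n * int p \<le> 0" by (simp add: mult_nonpos_nonneg)
    thus False using kn k0 by simp
  next
    case False
    hence "n * int p \<ge> 1 * int p" by (intro mult_right_mono) auto
    moreover have "int k < int p" using k(1) by simp
    ultimately show False using kn by linarith
  qed
qed

lemma chi_sum0: "(\<Sum>t\<in>{t::'a. t ^ q = t}. can_add_char m t) = 0"
proof -
  obtain t0 :: 'a where t0: "t0 ^ q = t0" "abs_trace m t0 \<noteq> 0" using exists_tr by blast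
  define S where "S = (\<Sum>t\<in>{t::'a. t ^ q = t}. can_add_char m t)"
  have "S = (\<Sum>t\<in>{t::'a. t ^ q = t}. can_add_char m (t0 + t))"
    unfolding S_def
    by (rule sum.reindex_bij_witness[of _ "\<lambda>t. t0 + t" "\<lambda>t. t - t0"])
       (auto simp: fq_add t0 frobq_diff)
  also have "\<dots> = (\<Sum>t\<in>{t::'a. t ^ q = t}. can_add_char m t0 * can_add_char m t)"
    by (intro sum.cong refl) (simp add: chi_add t0)
  also have "\<dots> = can_add_char m t0 * S" by (simp add: S_def sum_distrib_left)
  finally have "(can_add_char m t0 - 1) * S = 0" by (simp add: algebra_simps)
  thus ?thesis using chi_ne1[OF t0] by (simp add: S_def)
qed

lemma quad_bound:
  fixes s t :: 'a
  assumes "s \<noteq> 0"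
  shows "card {y::'a. y ^ (q + 1) = s \<and> y + y ^ q = t} + card {z::'a. (z ^ q = z \<and> z \<noteq> 0) \<and> z + inverse z * s = t} \<le> 2"
proof -
  define N where "N = {y::'a. y ^ (q + 1) = s \<and> y + y ^ q = t}"
  define K where "K = {z::'a. (z ^ q = z \<and> z \<noteq> 0) \<and> z + inverse z * s = t}"
  define R where "R = {r::'a. r * r - t * r + s = 0}"
  have cR: "card R \<le> 2"
  proof -
    define Q where "Q = [:s, -t, 1:]"
    have "Q \<noteq> 0" "degree Q \<le> 2" by (simp_all add: Q_def)
    hence "card {x. poly Q x = 0} \<le> 2" by (rule roots_card_le)
    moreover have "{x. poly Q x = 0} = R" by (auto simp: Q_def R_def algebra_simps)
    ultimately show ?thesis by simp
  qed
  have NR: "N \<subseteq> R"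
  proof
    fix y assume "y \<in> N"
    hence "y ^ (q + 1) = s" "y + y ^ q = t" by (auto simp: N_def)
    thus "y \<in> R" unfolding R_def by (auto simp: algebra_simps)
  qed
  have KR: "K \<subseteq> R"
  proof
    fix z assume "z \<in> K"
    hence "z \<noteq> 0" "z + inverse z * s = t" by (auto simp: K_def)
    thus "z \<in> R" unfolding R_def by (auto simp: field_simps)
  qed
  have eq: "card N + card K = card (N \<union> K) + card (N \<inter> K)" by (rule card_Un_Int) simp_all
  show ?thesis
  proof (cases "N \<inter> K = {}")
    case True
    have "card (N \<union> K) \<le> card R" using NR KR by (intro card_mono) auto
    thus ?thesis using eq True cR unfolding N_def K_def by simp
  next
    case False
    then obtain y where y: "y \<in> N" "y \<in> K" by blast
    hence yq: "y ^ q = y" and ys: "y ^ (q + 1) = s" and yt: "y + y ^ q = t" by (auto simp: N_def K_def)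
    hence s': "s = y * y" and t': "t = y + y" by auto
    have Ry: "R \<subseteq> {y}"
    proof
      fix r assume "r \<in> R"
      hence "(r - y) * (r - y) = 0" unfolding R_def s' t' by (simp add: algebra_simps)
      thus "r \<in> {y}" by simp
    qed
    have "card (N \<union> K) \<le> card {y}" by (rule card_mono) (use NR KR Ry in auto)
    moreover have "card (N \<inter> K) \<le> card {y}" by (rule card_mono) (use NR KR Ry in auto)
    ultimately have "card (N \<union> K) \<le> 1" "card (N \<inter> K) \<le> 1" by simp_all
    thus ?thesis using eq unfolding N_def K_def by simp
  qed
qed

lemma kloosterman:
  assumes s: "(s::'a) ^ q = s" "s \<noteq> 0"
  shows "(\<Sum>y\<in>{y::'a. y ^ (q + 1) = s}. can_add_char (2 * m) y)
       = - (\<Sum>z\<in>{z::'a. z ^ q = z \<and> z \<noteq> 0}. can_add_char m (z + inverse z * s))"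
proof -
  define Fq where "Fq = {t::'a. t ^ q = t}"
  define Fs where "Fs = {z::'a. z ^ q = z \<and> z \<noteq> 0}"
  define Fib where "Fib = {y::'a. y ^ (q + 1) = s}"
  define N where "N t = {y\<in>Fib. y + y ^ q = t}" for t
  define K where "K t = {z\<in>Fs. z + inverse z * s = t}" for t
  have im1: "(\<lambda>y. y + y ^ q) ` Fib \<subseteq> Fq" using tr_in by (auto simp: Fq_def)
  have im2: "(\<lambda>z. z + inverse z * s) ` Fs \<subseteq> Fq"
    using s by (auto simp: Fq_def Fs_def fq_add fq_mult fq_inverse)
  have g1: "(\<Sum>y\<in>Fib. can_add_char (2 * m) y) = (\<Sum>t\<in>Fq. of_nat (card (N t)) * can_add_char m t)"
    unfolding chi_2m N_def by (rule sum_group_card[OF finA finA im1])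
  have g2: "(\<Sum>z\<in>Fs. can_add_char m (z + inverse z * s)) = (\<Sum>t\<in>Fq. of_nat (card (K t)) * can_add_char m t)"
    unfolding K_def by (rule sum_group_card[OF finA finA im2])
  have c1: "(\<Sum>t\<in>Fq. card (N t)) = card Fib"
    using sum_group_card[OF finA finA im1, of "\<lambda>_. (1::nat)"] by (simp add: N_def)
  have c2: "(\<Sum>t\<in>Fq. card (K t)) = card Fs"
    using sum_group_card[OF finA finA im2, of "\<lambda>_. (1::nat)"] by (simp add: K_def)
  have cm: "card Fq = q" "card Fib = q + 1" using card_main s by (auto simp: Fq_def Fib_def)
  have z0: "(0::'a) \<in> Fq" using q_ge2 by (simp add: Fq_def)
  have "Fs = Fq - {0}" by (auto simp: Fs_def Fq_def)
  hence cFs: "card Fs = q - 1" using cm z0 by (simp add: card_Diff_singleton)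
  have bnd: "card (N t) + card (K t) \<le> 2" for t
    using quad_bound[OF s(2), of t] by (simp add: N_def K_def Fib_def Fs_def conj_commute)
  have tot: "(\<Sum>t\<in>Fq. card (N t) + card (K t)) \<ge> 2 * card Fq"
    using c1 c2 cm cFs q_ge2 by (simp add: sum.distrib)
  have two: "card (N t) + card (K t) = 2" if "t \<in> Fq" for t
    by (rule sum_le_const_eq[of Fq "\<lambda>t. card (N t) + card (K t)"]) (use bnd tot that in auto)
  have "(\<Sum>y\<in>Fib. can_add_char (2 * m) y) + (\<Sum>z\<in>Fs. can_add_char m (z + inverse z * s))
      = (\<Sum>t\<in>Fq. of_nat (card (N t) + card (K t)) * can_add_char m t)"
    unfolding g1 g2 by (simp add: sum.distrib algebra_simps)
  also have "\<dots> = (\<Sum>t\<in>Fq. 2 * can_add_char m t)" by (intro sum.cong refl) (simp add: two)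
  also have "\<dots> = 0" using chi_sum0 by (simp add: Fq_def flip: sum_distrib_left)
  finally show ?thesis by (simp add: Fib_def Fs_def eq_neg_iff_add_eq_0)
qed

lemma main_loc:
  fixes a b :: 'a and e1 e2 :: int
  assumes hb: "b \<noteq> 0" and hg: "gcd (int q + 1) e2 = 1"
  shows "(\<Sum>x\<in>{x::'a. x \<noteq> 0}.
            can_add_char (2 * m) (a * x powi ((int q + 1) * e1) + b * x powi e2))
       = - (\<Sum>z\<in>{z::'a. z ^ q = z \<and> z \<noteq> 0}. \<Sum>x\<in>{x::'a. x ^ q = x \<and> x \<noteq> 0}.
              can_add_char m (z + (a ^ q + a) * x powi e1 + inverse z * b ^ (q + 1) * x powi e2))"
proof -
  define Fs where "Fs = {z::'a. z ^ q = z \<and> z \<noteq> 0}"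
  define X where "X = {x::'a. x \<noteq> 0}"
  define A where "A = a ^ q + a"
  define B where "B = b ^ (q + 1)"
  define fib where "fib t = {y::'a. y ^ (q + 1) = B * t powi e2}" for t
  define T where "T = (SIGMA t:Fs. fib t)"
  define Phi where "Phi x = (x ^ (q + 1), b * x powi e2)" for x
  define chi :: "'a \<Rightarrow> complex" where "chi = can_add_char m"
  define G where "G = (\<lambda>t (y::'a). chi (A * t powi e1) * can_add_char (2 * m) y)"
  have hA: "A ^ q = A" unfolding A_def by (simp add: frobq pow_q_q)
  have hB: "B ^ q = B" "B \<noteq> 0" unfolding B_def using hb norm_in[of b] by simp_all
  have powi_pow: "(x powi k) ^ n = (x ^ n) powi k" for x :: 'a and k n
    by (simp add: power_int_power' power_int_power mult.commute)
  have Phi_in: "Phi x \<in> T" if "x \<in> X" for x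
  proof -
    have "x ^ (q + 1) \<in> Fs" using that norm_in[of x] by (simp add: Fs_def X_def)
    moreover have "(b * x powi e2) ^ (q + 1) = B * (x ^ (q + 1)) powi e2"
      by (simp only: B_def power_mult_distrib powi_pow)
    ultimately show ?thesis by (simp add: Phi_def T_def fib_def)
  qed
  obtain al be where bez: "al * (int q + 1) + be * e2 = 1" using bezout_int[of "int q + 1" e2] hg by auto
  have inj: "inj_on Phi X"
  proof (rule inj_onI)
    fix x x' assume x: "x \<in> X" and x': "x' \<in> X" and eq: "Phi x = Phi x'"
    define u where "u = x / x'"
    have u0: "u \<noteq> 0" using x x' by (simp add: u_def X_def)
    have "x ^ (q + 1) = x' ^ (q + 1)" "b * x powi e2 = b * x' powi e2" using eq by (simp_all add: Phi_def)
    hence u1: "u ^ (q + 1) = 1" and u2: "u powi e2 = 1"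
      using x x' hb by (simp_all add: u_def X_def power_divide power_int_divide_distrib)
    have "u = u powi (al * (int q + 1) + be * e2)" using bez by simp
    also have "\<dots> = u powi ((int q + 1) * al) * u powi (e2 * be)"
      using u0 by (simp add: power_int_add mult.commute)
    also have "\<dots> = (u powi (int q + 1)) powi al * (u powi e2) powi be"
      by (simp add: power_int_mult)
    also have "u powi (int q + 1) = u ^ (q + 1)"
      by (metis of_nat_Suc power_int_of_nat Suc_eq_plus1 add.commute)
    finally have "u = 1" using u1 u2 by simp
    thus "x = x'" using x' by (simp add: u_def X_def)
  qed
  have cm: "card {z::'a. z ^ q = z} = q" "\<And>s. s ^ q = s \<Longrightarrow> s \<noteq> 0 \<Longrightarrow> card {y::'a. y ^ (q + 1) = s} = q + 1"
    using card_main by auto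
  have z0: "(0::'a) \<in> {z::'a. z ^ q = z}" using q_ge2 by simp
  have "Fs = {z::'a. z ^ q = z} - {0}" by (auto simp: Fs_def)
  hence cFs: "card Fs = q - 1" using cm z0 by (simp add: card_Diff_singleton)
  have sfib: "(B * t powi e2) ^ q = B * t powi e2 \<and> B * t powi e2 \<noteq> 0" if "t \<in> Fs" for t
    using that hB by (auto simp: Fs_def fq_mult fq_powi)
  have "card T = (\<Sum>t\<in>Fs. card (fib t))" unfolding T_def by (rule card_SigmaI) simp_all
  also have "\<dots> = (\<Sum>t\<in>Fs. q + 1)" by (intro sum.cong refl) (use sfib cm in \<open>auto simp: fib_def\<close>)
  also have "\<dots> = (q - 1) * (q + 1)" using cFs by simp
  also have "\<dots> = card X"
  proof -
    have "card X = q ^ 2 - 1" using cardU by (simp add: X_def card_Diff_singleton Collect_neg_eq Compl_eq_Diff_UNIV)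
    thus ?thesis using q_ge2 by (cases q) (auto simp: power2_eq_square algebra_simps)
  qed
  finally have cT: "card T = card X" .
  have finT: "finite T" unfolding T_def by (rule finite_SigmaI) simp_all
  have img: "Phi ` X = T"
    by (rule card_subset_eq) (use Phi_in card_image[OF inj] cT finT in auto)
  have bij: "bij_betw Phi X T" using inj img by (simp add: bij_betw_def)
  have hterm: "can_add_char (2 * m) (a * x powi ((int q + 1) * e1) + b * x powi e2) = case_prod G (Phi x)"
    if "x \<in> X" for x
  proof -
    define w where "w = (x ^ (q + 1)) powi e1"
    define d where "d = b * x powi e2"
    have hw: "w ^ q = w" unfolding w_def by (rule fq_powi[OF norm_in])
    have xw: "x powi ((int q + 1) * e1) = w"
      unfolding w_def power_int_mult
      by (metis of_nat_Suc power_int_of_nat Suc_eq_plus1 add.commute)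
    have "(a * w + d) + (a * w + d) ^ q = A * w + (d + d ^ q)"
      by (simp add: frobq power_mult_distrib hw A_def algebra_simps)
    hence "can_add_char (2 * m) (a * w + d) = chi (A * w + (d + d ^ q))"
      unfolding chi_2m chi_def by (rule arg_cong)
    also have "\<dots> = chi (A * w) * chi (d + d ^ q)"
      unfolding chi_def by (rule chi_add) (simp_all add: fq_mult hA hw tr_in)
    also have "chi (d + d ^ q) = can_add_char (2 * m) d" by (simp add: chi_2m chi_def)
    finally show ?thesis by (simp add: xw d_def G_def Phi_def w_def)
  qed
  have "(\<Sum>x\<in>X. can_add_char (2 * m) (a * x powi ((int q + 1) * e1) + b * x powi e2))
      = (\<Sum>x\<in>X. case_prod G (Phi x))" by (intro sum.cong refl hterm)
  also have "\<dots> = (\<Sum>pr\<in>T. case_prod G pr)" by (rule sum.reindex_bij_betw[OF bij])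
  also have "\<dots> = (\<Sum>t\<in>Fs. \<Sum>y\<in>fib t. G t y)" unfolding T_def by (rule sum.Sigma[symmetric]) simp_all
  also have "\<dots> = (\<Sum>t\<in>Fs. chi (A * t powi e1) * (\<Sum>y\<in>fib t. can_add_char (2 * m) y))"
    by (simp add: G_def sum_distrib_left)
  also have "\<dots> = (\<Sum>t\<in>Fs. chi (A * t powi e1) *
       - (\<Sum>z\<in>Fs. chi (z + inverse z * (B * t powi e2))))"
  proof (intro sum.cong refl)
    fix t assume t: "t \<in> Fs"
    have "(\<Sum>y\<in>fib t. can_add_char (2 * m) y) = - (\<Sum>z\<in>Fs. chi (z + inverse z * (B * t powi e2)))"
      unfolding fib_def Fs_def chi_def by (rule kloosterman) (use sfib[OF t] in auto)
    thus "chi (A * t powi e1) * (\<Sum>y\<in>fib t. can_add_char (2 * m) y) =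
      chi (A * t powi e1) * - (\<Sum>z\<in>Fs. chi (z + inverse z * (B * t powi e2)))" by simp
  qed
  also have "\<dots> = - (\<Sum>z\<in>Fs. \<Sum>t\<in>Fs. chi (A * t powi e1) * chi (z + inverse z * (B * t powi e2)))"
  proof -
    have "(\<Sum>t\<in>Fs. chi (A * t powi e1) * - (\<Sum>z\<in>Fs. chi (z + inverse z * (B * t powi e2))))
        = - (\<Sum>t\<in>Fs. \<Sum>z\<in>Fs. chi (A * t powi e1) * chi (z + inverse z * (B * t powi e2)))"
      by (simp add: sum_distrib_left sum_negf)
    also have "\<dots> = - (\<Sum>z\<in>Fs. \<Sum>t\<in>Fs. chi (A * t powi e1) * chi (z + inverse z * (B * t powi e2)))"
      by (subst sum.swap) (rule refl)
    finally show ?thesis .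
  qed
  also have "\<dots> = - (\<Sum>z\<in>Fs. \<Sum>t\<in>Fs. chi (z + A * t powi e1 + inverse z * B * t powi e2))"
  proof -
    have "chi (A * t powi e1) * chi (z + inverse z * (B * t powi e2)) = chi (z + A * t powi e1 + inverse z * B * t powi e2)"
      if "z \<in> Fs" "t \<in> Fs" for z t
    proof -
      have "chi (A * t powi e1) * chi (z + inverse z * (B * t powi e2)) = chi (A * t powi e1 + (z + inverse z * (B * t powi e2)))"
        unfolding chi_def using that hA hB
        by (intro chi_add[symmetric]) (simp_all add: Fs_def fq_mult fq_powi fq_add fq_inverse)
      also have "A * t powi e1 + (z + inverse z * (B * t powi e2)) = z + A * t powi e1 + inverse z * B * t powi e2"
        by (simp add: algebra_simps)
      finally show ?thesis .
    qed
    thus ?thesis by (intro arg_cong[where f = uminus] sum.cong refl) auto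
  qed
  finally show ?thesis by (simp add: X_def Fs_def A_def B_def chi_def)
qed

end


theorem lemma2:
  fixes a b :: "'a::field" and e1 e2 :: int and p m q :: nat
  assumes "finite (UNIV :: 'a set)"
    and "prime p" and "m > 0" and "q = p ^ m"
    and "card (UNIV :: 'a set) = q ^ 2"
    and "a ^ q + a \<noteq> 0" and "b \<noteq> 0"
    and "gcd (int q + 1) e2 = 1"
  shows "(\<Sum>x\<in>{x::'a. x \<noteq> 0}.
            can_add_char (2 * m) (a * x powi ((int q + 1) * e1) + b * x powi e2))
       = - (\<Sum>z\<in>{z::'a. z ^ q = z \<and> z \<noteq> 0}. \<Sum>x\<in>{x::'a. x ^ q = x \<and> x \<noteq> 0}.
              can_add_char m (z + (a ^ q + a) * x powi e1 + inverse z * b ^ (q + 1) * x powi e2))"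
proof -
  interpret ffield p m q a
    by unfold_locales (use assms in auto)
  show ?thesis by (rule main_loc) (use assms in auto)
qed

end
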